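(* Let $\{P^{[n]}\}_{n\in\mathbb{N}}$ be a sequence of equal-neighbor matrices of increasing dimensions ($P^{[n]}\in\mathbb{R}^{n\times n}$). The following are equivalent: (i) there is no $P^{[n]}$-prominent individual; (ii) the sequence is one-time wise; (iii) the sequence is pre-uniformly wise.
   Context: An $n\times n$ matrix $P$ is equal-neighbor if $P=\mathrm{diag}(W\mathbf{1}_n)^{-1}W$ for some symmetric matrix $W\in\{0,1\}^{n\times n}$ with at least one nonzero entry in each row (diagonal entries allowed); equivalently $P_{ij}=1/d_i$ if $W_{ij}=1$ and $0$ otherwise, where $d_i=\sum_jW_{ij}$. $\|P\|_1=\max_j\sum_iP_{ij}$. A $P^{[n]}$-prominent individual is a sequence of nodes $k^{[n]}\in\{1,\dots,n\}$ whose total one-time influence $\frac1n\sum_{i=1}^nP^{[n]}_{ik^{[n]}}$ is of order $1$; "there is no $P^{[n]}$-prominent individual" means: for every sequence $k^{[n]}\in\{1,\dots,n\}$, $\frac1n\sum_{i=1}^nP^{[n]}_{ik^{[n]}}\to0$ as $n\to\infty$. One-time wisdom: for each $n$, $x^{[n]}_i(0)=\mu+\xi^{[n]}_i(0)$ with $\mu\in\mathbb{R}$ fixed and $\xi^{[n]}_i(0)$ independent Gaussian with mean $0$ and common variance $\sigma^2\in(0,\infty)$, $x^{[n]}(1)=P^{[n]}x^{[n]}(0)$; the sequence is one-time wise if $\frac1n\sum_ix^{[n]}_i(1)\to\mu$ in probability. The sequence is pre-uniformly wise if $\lim_{n\to\infty}\sup_{k\in\mathbb{N}}\|\tfrac1n(P^{[n]})^k\|_1=0$.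 *)

theory Defs
  imports "HOL-Probability.Probability"
begin

text \<open>Square matrices of dimension n are represented as functions nat => nat => real,
  with indices ranging over {0..<n} (entries outside this range are irrelevant).
  A sequence of matrices P^[n] is a function P :: nat => nat => nat => real,
  where P n is the n x n matrix P^[n].\<close>

definition equal_neighbor :: "nat \<Rightarrow> (nat \<Rightarrow> nat \<Rightarrow> real) \<Rightarrow> bool" where
  "equal_neighbor n A \<longleftrightarrow>
     (\<exists>W :: nat \<Rightarrow> nat \<Rightarrow> bool.
        (\<forall>i<n. \<forall>j<n. W i j = W j i) \<and>
        (\<forall>i<n. \<exists>j<n. W i j) \<and>
        (\<forall>i<n. \<forall>j<n. A i j = (if W i j then 1 / real (card {l. l < n \<and> W i l}) else 0)))"

fun mat_pow :: "nat \<Rightarrow> (nat \<Rightarrow> nat \<Rightarrow> real) \<Rightarrow> nat \<Rightarrow> nat \<Rightarrow> nat \<Rightarrow> real" where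
  "mat_pow n A 0 = (\<lambda>i j. if i = j then 1 else 0)"
| "mat_pow n A (Suc k) = (\<lambda>i j. \<Sum>l<n. mat_pow n A k i l * A l j)"

definition norm1 :: "nat \<Rightarrow> (nat \<Rightarrow> nat \<Rightarrow> real) \<Rightarrow> real" where
  "norm1 n A = (if n = 0 then 0 else Max ((\<lambda>j. \<Sum>i<n. \<bar>A i j\<bar>) ` {..<n}))"

definition no_prominent_individual :: "(nat \<Rightarrow> nat \<Rightarrow> nat \<Rightarrow> real) \<Rightarrow> bool" where
  "no_prominent_individual P \<longleftrightarrow>
     (\<forall>k :: nat \<Rightarrow> nat. (\<forall>n>0. k n < n) \<longrightarrow>
        (\<lambda>n. (1 / real n) * (\<Sum>i<n. P n i (k n))) \<longlonglongrightarrow> 0)"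

text \<open>One-time wisdom with respect to a given Gaussian realization: for each n,
  xi n i (i < n) are independent N(0, sigma^2) random variables on the probability
  space M n; x_i(0) = mu + xi n i, x(1) = P^[n] x(0); the average of x(1)
  converges to mu in probability.\<close>
definition one_time_wise ::
  "(nat \<Rightarrow> 'a measure) \<Rightarrow> (nat \<Rightarrow> nat \<Rightarrow> 'a \<Rightarrow> real) \<Rightarrow> real \<Rightarrow> (nat \<Rightarrow> nat \<Rightarrow> nat \<Rightarrow> real) \<Rightarrow> bool" where
  "one_time_wise M \<xi> \<mu> P \<longleftrightarrow>
     (\<forall>\<epsilon>>0. (\<lambda>n. measure (M n)
        {\<omega> \<in> space (M n).
           \<bar>(1 / real n) * (\<Sum>i<n. \<Sum>j<n. P n i j * (\<mu> + \<xi> n j \<omega>)) - \<mu>\<bar> > \<epsilon>})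
        \<longlonglongrightarrow> 0)"

definition pre_uniformly_wise :: "(nat \<Rightarrow> nat \<Rightarrow> nat \<Rightarrow> real) \<Rightarrow> bool" where
  "pre_uniformly_wise P \<longleftrightarrow>
     (\<lambda>n. SUP k. norm1 n (\<lambda>i j. mat_pow n (P n) k i j / real n)) \<longlonglongrightarrow> 0"

end

theory Submission
  imports Defs
begin

lemma en_basic:
  assumes "equal_neighbor n A"
  obtains W :: "nat \<Rightarrow> nat \<Rightarrow> bool" where
    "\<And>i j. i<n \<Longrightarrow> j<n \<Longrightarrow> W i j = W j i"
    "\<And>i. i<n \<Longrightarrow> real (card {l. l < n \<and> W i l}) \<ge> 1"
    "\<And>i. i<n \<Longrightarrow> real (card {l. l < n \<and> W i l}) = (\<Sum>l<n. if W i l then 1 else 0)"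
    "\<And>i j. i<n \<Longrightarrow> j<n \<Longrightarrow> A i j = (if W i j then 1 else 0) / real (card {l. l < n \<and> W i l})"
proof -
  from assms obtain W where s: "\<forall>i<n. \<forall>j<n. W i j = W j i" and ne: "\<forall>i<n. \<exists>j<n. W i j"
    and a: "\<forall>i<n. \<forall>j<n. A i j = (if W i j then 1 / real (card {l. l < n \<and> W i l}) else 0)"
    unfolding equal_neighbor_def by blast
  have c: "real (card {l. l < n \<and> W i l}) \<ge> 1" if i: "i<n" for i
  proof -
    obtain j where "j<n" "W i j" using ne i by blast
    then have "{l. l < n \<and> W i l} \<noteq> {}" by blast
    moreover have "finite {l. l < n \<and> W i l}" by simp
    ultimately have "card {l. l < n \<and> W i l} \<ge> 1"
      by (simp add: Suc_leI card_gt_0_iff)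
    then show ?thesis by simp
  qed
  have d: "real (card {l. l < n \<and> W i l}) = (\<Sum>l<n. if W i l then 1 else 0)" for i
  proof -
    have "(\<Sum>l<n. if W i l then 1 else 0::real) = real (card ({..<n} \<inter> {l. W i l}))"
      by (simp add: sum.If_cases)
    also have "{..<n} \<inter> {l. W i l} = {l. l < n \<and> W i l}" by auto
    finally show ?thesis by simp
  qed
  show ?thesis
    apply (rule that[of W])
    subgoal using s by blast
    subgoal using c by blast
    subgoal using d by blast
    subgoal using a by simp
    done
qed

lemma en_nonneg: "equal_neighbor n A \<Longrightarrow> i<n \<Longrightarrow> j<n \<Longrightarrow> 0 \<le> A i j"
  by (erule en_basic) (simp add: sum_nonneg)

lemma en_rowsum: assumes "equal_neighbor n A" "i<n" shows "(\<Sum>j<n. A i j) = 1"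
proof -
  obtain W where W: "\<And>i j. i<n \<Longrightarrow> j<n \<Longrightarrow> W i j = W j i"
    "\<And>i. i<n \<Longrightarrow> real (card {l. l < n \<and> W i l}) \<ge> 1"
    "\<And>i. i<n \<Longrightarrow> real (card {l. l < n \<and> W i l}) = (\<Sum>l<n. if W i l then 1 else 0)"
    "\<And>i j. i<n \<Longrightarrow> j<n \<Longrightarrow> A i j = (if W i j then 1 else 0) / real (card {l. l < n \<and> W i l})"
    by (rule en_basic[OF assms(1)], rule that, assumption+)
  have "(\<Sum>j<n. A i j) = (\<Sum>j<n. (if W i j then 1 else 0) / real (card {l. l < n \<and> W i l}))"
    using W(4) assms(2) by simp
  also have "\<dots> = (\<Sum>j<n. (if W i j then 1 else 0)) / real (card {l. l < n \<and> W i l})"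
    by (simp add: sum_divide_distrib)
  also have "\<dots> = 1" using W(2,3)[OF assms(2)] by simp
  finally show ?thesis .
qed

lemma en_colpos: assumes "equal_neighbor n A" "j<n" shows "0 < (\<Sum>i<n. A i j)"
proof -
  obtain W where W: "\<And>i j. i<n \<Longrightarrow> j<n \<Longrightarrow> W i j = W j i"
    "\<And>i. i<n \<Longrightarrow> real (card {l. l < n \<and> W i l}) \<ge> 1"
    "\<And>i. i<n \<Longrightarrow> real (card {l. l < n \<and> W i l}) = (\<Sum>l<n. if W i l then 1 else 0)"
    "\<And>i j. i<n \<Longrightarrow> j<n \<Longrightarrow> A i j = (if W i j then 1 else 0) / real (card {l. l < n \<and> W i l})"
    by (rule en_basic[OF assms(1)], rule that, assumption+)
  have ge1: "(\<Sum>l<n. if W j l then 1 else 0::real) \<ge> 1" using W(2)[OF assms(2)] W(3)[OF assms(2)] by simp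
  have "\<exists>l<n. W j l"
  proof (rule ccontr)
    assume "\<not> (\<exists>l<n. W j l)"
    then have "(\<Sum>l<n. if W j l then 1 else 0::real) = 0" by (intro sum.neutral) auto
    then show False using ge1 by simp
  qed
  then obtain l where l: "l<n" "W j l" by blast
  have "W l j" using W(1)[OF l(1) assms(2)] l(2) by simp
  then have "0 < A l j" using W(2)[OF l(1)] W(4)[OF l(1) assms(2)] by simp
  also have "A l j \<le> (\<Sum>i<n. A i j)"
    by (rule member_le_sum) (use l en_nonneg[OF assms(1) _ assms(2)] in auto)
  finally show ?thesis .
qed

lemma en_coltotal: assumes "equal_neighbor n A" shows "(\<Sum>j<n. \<Sum>i<n. A i j) = real n"
proof -
  have "(\<Sum>j<n. \<Sum>i<n. A i j) = (\<Sum>i<n. \<Sum>j<n. A i j)" by (rule sum.swap)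
  also have "\<dots> = (\<Sum>i<n. 1)" using en_rowsum[OF assms] by simp
  finally show ?thesis by simp
qed

lemma mat_pow_nonneg: "equal_neighbor n A \<Longrightarrow> j<n \<Longrightarrow> 0 \<le> mat_pow n A k i j"
proof (induction k arbitrary: i j)
  case 0 then show ?case by simp
next
  case (Suc k) then show ?case
    by (auto intro!: sum_nonneg mult_nonneg_nonneg en_nonneg[OF Suc.prems(1)])
qed

lemma colsum_rec: "(\<Sum>i<n. mat_pow n A (Suc k) i j) = (\<Sum>l<n. (\<Sum>i<n. mat_pow n A k i l) * A l j)"
  by (simp add: sum_distrib_right) (rule sum.swap)

lemma en_pow_bound:
  assumes EN: "equal_neighbor n A" and j: "j<n" and k: "0<k"
  shows "(\<Sum>i<n. mat_pow n A k i j)\<^sup>2 \<le> real n * (\<Sum>i<n. A i j)"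
proof -
  obtain W where W: "\<And>i j. i<n \<Longrightarrow> j<n \<Longrightarrow> W i j = W j i"
    "\<And>i. i<n \<Longrightarrow> real (card {l. l < n \<and> W i l}) \<ge> 1"
    "\<And>i. i<n \<Longrightarrow> real (card {l. l < n \<and> W i l}) = (\<Sum>l<n. if W i l then 1 else 0)"
    "\<And>i j. i<n \<Longrightarrow> j<n \<Longrightarrow> A i j = (if W i j then 1 else 0) / real (card {l. l < n \<and> W i l})"
    by (rule en_basic[OF EN], rule that, assumption+)
  define d where "d i = real (card {l. l < n \<and> W i l})" for i
  define w where "w i j = (if W i j then 1 else 0::real)" for i j
  define r where "r k j = (\<Sum>i<n. mat_pow n A k i j)" for k j
  define E where "E k = (\<Sum>j<n. (r k j)\<^sup>2 / d j)" for k
  have dpos: "d i \<ge> 1" if "i<n" for i using W(2) that d_def by simp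
  have dsum: "d i = (\<Sum>l<n. w i l)" if "i<n" for i using W(3) that d_def w_def by simp
  have wsym: "w i j = w j i" if "i<n" "j<n" for i j using W(1) that w_def by simp
  have w01: "w i j * w i j = w i j" for i j by (simp add: w_def)
  have w0: "0 \<le> w i j" for i j by (simp add: w_def)
  have w2: "(w i j)\<^sup>2 = w i j" for i j by (simp add: w_def)
  have Aeq: "A i j = w i j / d i" if "i<n" "j<n" for i j using W(4) that w_def d_def by simp
  have rrec: "r (Suc k) j = (\<Sum>l<n. w l j * (r k l / d l))" if "j<n" for k j
    unfolding r_def colsum_rec using Aeq that by (intro sum.cong) auto
  have dsum': "d j = (\<Sum>l<n. w l j)" if "j<n" for j
    using dsum[OF that] wsym that by simp
  have step: "E (Suc k) \<le> E k" for k
  proof -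
    have "(r (Suc k) j)\<^sup>2 / d j \<le> (\<Sum>l<n. w l j * (r k l / d l)\<^sup>2)" if j: "j<n" for j
    proof -
      have "(r (Suc k) j)\<^sup>2 = (\<Sum>l<n. w l j * (w l j * (r k l / d l)))\<^sup>2"
        using rrec[OF j] by (simp add: mult.assoc[symmetric] w01)
      also have "\<dots> \<le> (\<Sum>l<n. (w l j)\<^sup>2) * (\<Sum>l<n. (w l j * (r k l / d l))\<^sup>2)"
        by (rule Cauchy_Schwarz_ineq_sum)
      also have "\<dots> = d j * (\<Sum>l<n. w l j * (r k l / d l)\<^sup>2)"
      proof -
        have "(\<Sum>l<n. (w l j)\<^sup>2) = d j" using dsum'[OF j] by (simp add: w2)
        moreover have "(\<Sum>l<n. (w l j * (r k l / d l))\<^sup>2) = (\<Sum>l<n. w l j * (r k l / d l)\<^sup>2)"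
          by (intro sum.cong refl) (simp only: power_mult_distrib w2)
        ultimately show ?thesis by simp
      qed
      finally show ?thesis using dpos[OF j] by (simp add: divide_le_eq mult.commute)
    qed
    then have "E (Suc k) \<le> (\<Sum>j<n. \<Sum>l<n. w l j * (r k l / d l)\<^sup>2)"
      unfolding E_def by (intro sum_mono) auto
    also have "\<dots> = (\<Sum>l<n. (\<Sum>j<n. w l j) * (r k l / d l)\<^sup>2)"
      by (subst sum.swap) (simp add: sum_distrib_right)
    also have "\<dots> = (\<Sum>l<n. d l * (r k l / d l)\<^sup>2)"
      using dsum by simp
    also have "\<dots> = E k" unfolding E_def
      by (intro sum.cong refl) (use dpos in \<open>auto simp: power2_eq_square\<close>)
    finally show ?thesis .
  qed
  have E0: "E 0 \<le> real n"
  proof -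
    have "E 0 = (\<Sum>j<n. 1 / d j)" unfolding E_def r_def
      by (intro sum.cong refl) (simp add: sum.delta)
    also have "\<dots> \<le> (\<Sum>j<n. 1)" by (intro sum_mono) (use dpos in \<open>auto simp: divide_le_eq\<close>)
    finally show ?thesis by simp
  qed
  have Ek: "E k \<le> real n" for k
  proof (induction k)
    case 0 then show ?case using E0 .
  next
    case (Suc k) then show ?case using step[of k] by linarith
  qed
  obtain k' where k': "k = Suc k'" using k not0_implies_Suc by blast
  have "(r k j)\<^sup>2 = (\<Sum>l<n. (w l j / sqrt (d l)) * (w l j * sqrt (d l) * (r k' l / d l)))\<^sup>2"
    unfolding k' rrec[OF j]
  proof -
    have eq: "w l j * (r k' l / d l) = (w l j / sqrt (d l)) * (w l j * sqrt (d l) * (r k' l / d l))"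
      if "l \<in> {..<n}" for l
    proof -
      have "0 < sqrt (d l)" using dpos[of l] that by simp
      then show ?thesis by (cases "W l j") (simp_all add: w_def)
    qed
    have "(\<Sum>l<n. w l j * (r k' l / d l)) = (\<Sum>l<n. (w l j / sqrt (d l)) * (w l j * sqrt (d l) * (r k' l / d l)))"
      by (rule sum.cong[OF refl eq])
    then show "(\<Sum>l<n. w l j * (r k' l / d l))\<^sup>2 = (\<Sum>l<n. (w l j / sqrt (d l)) * (w l j * sqrt (d l) * (r k' l / d l)))\<^sup>2"
      by (rule arg_cong)
  qed
  also have "\<dots> \<le> (\<Sum>l<n. (w l j / sqrt (d l))\<^sup>2) * (\<Sum>l<n. (w l j * sqrt (d l) * (r k' l / d l))\<^sup>2)"
    by (rule Cauchy_Schwarz_ineq_sum)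
  also have "(\<Sum>l<n. (w l j / sqrt (d l))\<^sup>2) = (\<Sum>l<n. A l j)"
  proof (intro sum.cong refl)
    fix l assume "l \<in> {..<n}"
    then have l: "l<n" "0 \<le> d l" using dpos[of l] by auto
    then show "(w l j / sqrt (d l))\<^sup>2 = A l j" using Aeq[of l j] j by (simp add: power_divide w2)
  qed
  finally have CS: "(r k j)\<^sup>2 \<le> (\<Sum>l<n. A l j) * (\<Sum>l<n. (w l j * sqrt (d l) * (r k' l / d l))\<^sup>2)" .
  have Y: "(\<Sum>l<n. (w l j * sqrt (d l) * (r k' l / d l))\<^sup>2) \<le> E k'"
    unfolding E_def
  proof (intro sum_mono)
    fix l assume "l \<in> {..<n}"
    then have l: "d l \<ge> 1" using dpos by auto
    have "(w l j * sqrt (d l) * (r k' l / d l))\<^sup>2 = (w l j)\<^sup>2 * (sqrt (d l))\<^sup>2 * (r k' l / d l)\<^sup>2"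
      by (simp only: power_mult_distrib)
    also have "\<dots> = w l j * d l * ((r k' l)\<^sup>2 / (d l)\<^sup>2)"
      using l by (simp add: w2 power_divide)
    also have "\<dots> = w l j * ((r k' l)\<^sup>2 / d l)"
      using l by (simp add: power2_eq_square)
    also have "\<dots> \<le> (r k' l)\<^sup>2 / d l"
      using l by (simp add: w_def)
    finally show "(w l j * sqrt (d l) * (r k' l / d l))\<^sup>2 \<le> (r k' l)\<^sup>2 / d l" .
  qed
  have "(\<Sum>l<n. A l j) * (\<Sum>l<n. (w l j * sqrt (d l) * (r k' l / d l))\<^sup>2) \<le> (\<Sum>l<n. A l j) * real n"
    using order_trans[OF Y Ek[of k']] en_colpos[OF EN j] by (intro mult_left_mono) auto
  with CS have "(r k j)\<^sup>2 \<le> (\<Sum>l<n. A l j) * real n" by linarith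
  then show ?thesis unfolding r_def by (simp add: mult.commute)
qed

definition mx :: "nat \<Rightarrow> (nat \<Rightarrow> nat \<Rightarrow> real) \<Rightarrow> real" where
  "mx n A = (if n = 0 then 0 else Max ((\<lambda>j. (\<Sum>i<n. A i j) / real n) ` {..<n}))"

lemma mx_ge: "j < n \<Longrightarrow> (\<Sum>i<n. A i j) / real n \<le> mx n A"
  unfolding mx_def by (auto intro: Max_ge)

lemma mx_attained: "0 < n \<Longrightarrow> \<exists>j<n. (\<Sum>i<n. A i j) / real n = mx n A"
proof -
  assume n: "0<n"
  have "Max ((\<lambda>j. (\<Sum>i<n. A i j) / real n) ` {..<n}) \<in> (\<lambda>j. (\<Sum>i<n. A i j) / real n) ` {..<n}"
    using n by (intro Max_in) auto
  then show ?thesis using n unfolding mx_def by auto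
qed

lemma mx_nonneg: "equal_neighbor n A \<Longrightarrow> 0 \<le> mx n A"
proof (cases "n=0")
  case False
  assume EN: "equal_neighbor n A"
  then obtain j where "j<n" "(\<Sum>i<n. A i j) / real n = mx n A" using mx_attained False by blast
  then show ?thesis using en_colpos[OF EN \<open>j<n\<close>] by (metis divide_nonneg_nonneg less_eq_real_def of_nat_0_le_iff)
qed (simp add: mx_def)

lemma norm1_le: "0 < n \<Longrightarrow> (\<And>j. j<n \<Longrightarrow> (\<Sum>i<n. \<bar>F i j\<bar>) \<le> B) \<Longrightarrow> norm1 n F \<le> B"
  unfolding norm1_def by (auto intro!: Max.boundedI)

lemma norm1_ge: "j < n \<Longrightarrow> (\<Sum>i<n. \<bar>F i j\<bar>) \<le> norm1 n F"
  unfolding norm1_def by (auto intro!: Max_ge)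

lemma colsum_scaled:
  assumes EN: "equal_neighbor n A" and j: "j<n"
  shows "(\<Sum>i<n. \<bar>mat_pow n A k i j / real n\<bar>) = (\<Sum>i<n. mat_pow n A k i j) / real n"
  using mat_pow_nonneg[OF EN j] by (simp add: sum_divide_distrib)

lemma mat_pow_1: "mat_pow n A (Suc 0) i j = (if i < n then A i j else 0)"
  by (simp add: if_distrib[where f="\<lambda>x. x * _"] sum.delta cong: if_cong)

lemma norm1_pow_le:
  assumes EN: "equal_neighbor n A" and n: "0<n" and k: "0<k"
  shows "norm1 n (\<lambda>i j. mat_pow n A k i j / real n) \<le> sqrt (mx n A)"
proof (rule norm1_le[OF n])
  fix j assume j: "j<n"
  have b: "(\<Sum>i<n. mat_pow n A k i j)\<^sup>2 \<le> real n * (\<Sum>i<n. A i j)"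
    by (rule en_pow_bound[OF EN j k])
  have nn: "0 \<le> (\<Sum>i<n. mat_pow n A k i j)" using mat_pow_nonneg[OF EN j] by (simp add: sum_nonneg)
  have "((\<Sum>i<n. mat_pow n A k i j) / real n)\<^sup>2 \<le> (\<Sum>i<n. A i j) / real n"
    using b n by (simp add: power_divide divide_le_eq field_simps power2_eq_square)
  also have "\<dots> \<le> mx n A" by (rule mx_ge[OF j])
  finally have "(\<Sum>i<n. mat_pow n A k i j) / real n \<le> sqrt (mx n A)"
    using nn by (simp add: real_le_rsqrt)
  then show "(\<Sum>i<n. \<bar>mat_pow n A k i j / real n\<bar>) \<le> sqrt (mx n A)"
    using colsum_scaled[OF EN j] by simp
qed

lemma norm1_pow0:
  assumes n: "0<n"
  shows "norm1 n (\<lambda>i j. mat_pow n A 0 i j / real n) \<le> 1 / real n"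
proof (rule norm1_le[OF n])
  fix j assume j: "j<n"
  have "(\<Sum>i<n. \<bar>mat_pow n A 0 i j / real n\<bar>) = (\<Sum>i<n. if i = j then 1 / real n else 0)"
    by (intro sum.cong) auto
  also have "\<dots> = 1 / real n" using j by (simp add: sum.delta')
  finally show "(\<Sum>i<n. \<bar>mat_pow n A 0 i j / real n\<bar>) \<le> 1 / real n" by simp
qed

lemma norm1_pow1:
  assumes EN: "equal_neighbor n A" and n: "0<n"
  shows "mx n A \<le> norm1 n (\<lambda>i j. mat_pow n A 1 i j / real n)"
proof -
  obtain j where j: "j<n" "(\<Sum>i<n. A i j) / real n = mx n A" using mx_attained[OF n] by blast
  have "(\<Sum>i<n. \<bar>mat_pow n A 1 i j / real n\<bar>) = (\<Sum>i<n. mat_pow n A 1 i j) / real n"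
    by (rule colsum_scaled[OF EN j(1)])
  also have "(\<Sum>i<n. mat_pow n A 1 i j) = (\<Sum>i<n. A i j)"
    by (intro sum.cong) (auto simp: mat_pow_1 simp del: mat_pow.simps)
  finally show ?thesis using j norm1_ge[OF j(1), of "\<lambda>i j. mat_pow n A 1 i j / real n"] by simp
qed

lemma SUP_bounds:
  assumes EN: "equal_neighbor n A" and n: "0<n"
  shows "mx n A \<le> (SUP k. norm1 n (\<lambda>i j. mat_pow n A k i j / real n))"
    and "(SUP k. norm1 n (\<lambda>i j. mat_pow n A k i j / real n)) \<le> max (1 / real n) (sqrt (mx n A))"
proof -
  have ub: "norm1 n (\<lambda>i j. mat_pow n A k i j / real n) \<le> max (1 / real n) (sqrt (mx n A))" for k
    using norm1_pow0[OF n, of A] norm1_pow_le[OF EN n, of k] by (cases "k=0") auto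
  have bdd: "bdd_above (range (\<lambda>k. norm1 n (\<lambda>i j. mat_pow n A k i j / real n)))"
    by (rule bdd_aboveI2, rule ub)
  show "mx n A \<le> (SUP k. norm1 n (\<lambda>i j. mat_pow n A k i j / real n))"
    using norm1_pow1[OF EN n] cSUP_upper[OF _ bdd, of 1] by (meson UNIV_I order_trans)
  show "(SUP k. norm1 n (\<lambda>i j. mat_pow n A k i j / real n)) \<le> max (1 / real n) (sqrt (mx n A))"
    using ub by (intro cSUP_least) auto
qed

lemma prominent_iff:
  assumes EN: "\<And>n. equal_neighbor n (P n)"
  shows "no_prominent_individual P \<longleftrightarrow> (\<lambda>n. mx n (P n)) \<longlonglongrightarrow> 0"
proof
  assume H: "no_prominent_individual P"
  define k where "k n = (SOME j. j<n \<and> (\<Sum>i<n. P n i j) / real n = mx n (P n))" for n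
  have kk: "k n < n \<and> (\<Sum>i<n. P n i (k n)) / real n = mx n (P n)" if "0<n" for n
    unfolding k_def by (rule someI_ex) (rule mx_attained[OF that])
  have "(\<lambda>n. (1 / real n) * (\<Sum>i<n. P n i (k n))) \<longlonglongrightarrow> 0"
    using H kk unfolding no_prominent_individual_def by blast
  moreover have "(1 / real n) * (\<Sum>i<n. P n i (k n)) = mx n (P n)" for n
    using kk[of n] by (cases "n=0") (auto simp: mx_def)
  ultimately show "(\<lambda>n. mx n (P n)) \<longlonglongrightarrow> 0" by simp
next
  assume H: "(\<lambda>n. mx n (P n)) \<longlonglongrightarrow> 0"
  show "no_prominent_individual P" unfolding no_prominent_individual_def
  proof (intro allI impI)
    fix k :: "nat \<Rightarrow> nat" assume k: "\<forall>n>0. k n < n"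
    have lo: "0 \<le> (1 / real n) * (\<Sum>i<n. P n i (k n))" for n
    proof (cases "n=0")
      case False then show ?thesis using k en_nonneg[OF EN] by (auto intro!: divide_nonneg_nonneg sum_nonneg)
    qed simp
    have hi: "(1 / real n) * (\<Sum>i<n. P n i (k n)) \<le> mx n (P n)" for n
    proof (cases "n=0")
      case False then show ?thesis using k mx_ge[of "k n" n "P n"] by simp
    qed (simp add: mx_def)
    show "(\<lambda>n. (1 / real n) * (\<Sum>i<n. P n i (k n))) \<longlonglongrightarrow> 0"
      by (rule tendsto_sandwich[OF _ _ tendsto_const H]) (use lo hi in auto)
  qed
qed

lemma preuniform_iff:
  assumes EN: "\<And>n. equal_neighbor n (P n)"
  shows "pre_uniformly_wise P \<longleftrightarrow> (\<lambda>n. mx n (P n)) \<longlonglongrightarrow> 0"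
proof
  assume H: "pre_uniformly_wise P"
  show "(\<lambda>n. mx n (P n)) \<longlonglongrightarrow> 0"
  proof (rule tendsto_sandwich[OF _ _ tendsto_const H[unfolded pre_uniformly_wise_def]])
    show "\<forall>\<^sub>F n in sequentially. 0 \<le> mx n (P n)" using mx_nonneg[OF EN] by simp
    show "\<forall>\<^sub>F n in sequentially. mx n (P n) \<le> (SUP k. norm1 n (\<lambda>i j. mat_pow n (P n) k i j / real n))"
      using eventually_gt_at_top[of 0] by eventually_elim (rule SUP_bounds(1)[OF EN])
  qed
next
  assume H: "(\<lambda>n. mx n (P n)) \<longlonglongrightarrow> 0"
  have t: "(\<lambda>n. max (1 / real n) (sqrt (mx n (P n)))) \<longlonglongrightarrow> max 0 (sqrt 0)"
    by (intro tendsto_max tendsto_real_sqrt H lim_const_over_n)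
  show "pre_uniformly_wise P" unfolding pre_uniformly_wise_def
  proof (rule tendsto_sandwich[OF _ _ tendsto_const t[simplified]])
    show "\<forall>\<^sub>F n in sequentially. 0 \<le> (SUP k. norm1 n (\<lambda>i j. mat_pow n (P n) k i j / real n))"
      using eventually_gt_at_top[of 0]
      by eventually_elim (rule order_trans[OF mx_nonneg[OF EN] SUP_bounds(1)[OF EN]])
    show "\<forall>\<^sub>F n in sequentially. (SUP k. norm1 n (\<lambda>i j. mat_pow n (P n) k i j / real n)) \<le> max (1 / real n) (sqrt (mx n (P n)))"
      using eventually_gt_at_top[of 0] by eventually_elim (rule SUP_bounds(2)[OF EN])
  qed
qed

definition Qn :: "real \<Rightarrow> real" where
  "Qn t = measure (density lborel std_normal_density) {x::real. t < \<bar>x\<bar>}"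

lemma Qn_sets: "{x::real. t < \<bar>x\<bar>} \<in> sets borel"
  by measurable

lemma Qn_mono: assumes "t1 \<le> t2" shows "Qn t2 \<le> Qn t1"
proof -
  interpret prob_space "density lborel std_normal_density" by (rule prob_space_normal_density) simp
  show ?thesis unfolding Qn_def
    by (rule finite_measure_mono) (use assms Qn_sets in auto)
qed

lemma Qn_nonneg: "0 \<le> Qn t"
  unfolding Qn_def by simp

lemma Qn_pos: "0 < Qn t"
proof (rule ccontr)
  interpret prob_space "density lborel std_normal_density" by (rule prob_space_normal_density) simp
  let ?A = "{x::real. t < \<bar>x\<bar>}"
  let ?B = "{\<bar>t\<bar> + 1 <..< \<bar>t\<bar> + 2}"
  assume "\<not> 0 < Qn t"
  then have "measure (density lborel std_normal_density) ?A = 0"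
    using Qn_nonneg[of t] unfolding Qn_def by simp
  then have "emeasure (density lborel std_normal_density) ?A = 0"
    by (simp add: emeasure_eq_measure)
  then have "(\<integral>\<^sup>+ x. ennreal (std_normal_density x) * indicator ?A x \<partial>lborel) = 0"
    using Qn_sets by (subst (asm) emeasure_density) auto
  then have "AE x in lborel. ennreal (std_normal_density x) * indicator ?A x = 0"
    using Qn_sets by (subst (asm) nn_integral_0_iff_AE) auto
  moreover have "ennreal (std_normal_density x) * indicator ?A x = 0 \<longrightarrow> x \<notin> ?B" for x
  proof (intro impI notI)
    assume *: "ennreal (std_normal_density x) * indicator ?A x = 0" and "x \<in> ?B"
    then have "x \<in> ?A" by auto
    then show False using * normal_density_pos[of 1 0 x] by (simp add: indicator_def)
  qed
  ultimately have "AE x in lborel. x \<notin> ?B"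
    by (auto elim: eventually_mono)
  then have "emeasure lborel ?B = 0"
    by (subst (asm) AE_iff_measurable[of ?B]) auto
  then show False by simp
qed

lemma Qn_lim: "(\<lambda>m::nat. Qn (real m)) \<longlonglongrightarrow> 0"
proof -
  interpret prob_space "density lborel std_normal_density" by (rule prob_space_normal_density) simp
  have "(\<lambda>m. measure (density lborel std_normal_density) {x::real. real m < \<bar>x\<bar>}) \<longlonglongrightarrow>
        measure (density lborel std_normal_density) (\<Inter>m. {x::real. real m < \<bar>x\<bar>})"
    by (rule finite_Lim_measure_decseq) (use Qn_sets in \<open>auto simp: decseq_def\<close>)
  moreover have "(\<Inter>m. {x::real. real m < \<bar>x\<bar>}) = {}"
  proof -
    have "x \<notin> (\<Inter>m. {x::real. real m < \<bar>x\<bar>})" for x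
    proof -
      obtain m where "\<bar>x\<bar> < real m" using reals_Archimedean2 by blast
      then have "\<not> real m < \<bar>x\<bar>" by simp
      then show ?thesis by blast
    qed
    then show ?thesis by blast
  qed
  ultimately show ?thesis unfolding Qn_def by simp
qed

lemma Qn_to0:
  assumes s: "s \<longlonglongrightarrow> 0" and spos: "\<forall>\<^sub>F n in sequentially. 0 < s n" and e: "0 < \<epsilon>"
  shows "(\<lambda>n. Qn (\<epsilon> / s n)) \<longlonglongrightarrow> 0"
proof (rule order_tendstoI)
  fix a :: real assume "a < 0"
  then show "\<forall>\<^sub>F n in sequentially. a < Qn (\<epsilon> / s n)"
    by (intro always_eventually allI) (metis Qn_nonneg less_le_trans)
next
  fix a :: real assume a: "0 < a"
  from order_tendstoD(2)[OF Qn_lim a] obtain m where m: "Qn (real m) < a"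
    by (auto simp: eventually_sequentially)
  have "\<forall>\<^sub>F n in sequentially. s n < \<epsilon> / (real m + 1)"
    using e by (intro order_tendstoD(2)[OF s]) simp
  then show "\<forall>\<^sub>F n in sequentially. Qn (\<epsilon> / s n) < a"
    using spos
  proof (eventually_elim)
    case (elim n)
    then have "s n * (real m + 1) < \<epsilon>" by (simp add: less_divide_eq)
    then have "real m \<le> \<epsilon> / s n" using elim by (simp add: le_divide_eq algebra_simps)
    then show ?case using Qn_mono m by (meson le_less_trans)
  qed
qed

lemma Qn_from0:
  assumes H: "(\<lambda>n. Qn (1 / s n)) \<longlonglongrightarrow> 0" and spos: "\<forall>\<^sub>F n in sequentially. 0 < s n"
  shows "s \<longlonglongrightarrow> 0"
proof (rule order_tendstoI)
  fix a :: real assume "a < 0"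
  then show "\<forall>\<^sub>F n in sequentially. a < s n" using spos by (auto elim: eventually_mono)
next
  fix a :: real assume a: "0 < a"
  have "\<forall>\<^sub>F n in sequentially. Qn (1 / s n) < Qn (1 / a)"
    by (rule order_tendstoD(2)[OF H Qn_pos])
  then show "\<forall>\<^sub>F n in sequentially. s n < a"
    using spos
  proof (eventually_elim)
    case (elim n)
    show ?case
    proof (rule ccontr)
      assume "\<not> s n < a"
      then have "1 / s n \<le> 1 / a" using a by (simp add: frac_le)
      then have "Qn (1 / a) \<le> Qn (1 / s n)" by (rule Qn_mono)
      then show False using elim by simp
    qed
  qed
qed

lemma normal_tail:
  assumes P: "prob_space M" and D: "distributed M lborel Z (normal_density 0 s)"
    and s: "0 < s"
  shows "measure M {\<omega> \<in> space M. \<epsilon> < \<bar>Z \<omega>\<bar>} = Qn (\<epsilon> / s)"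
proof -
  interpret prob_space M by (rule P)
  have D': "distributed M lborel (\<lambda>x. (Z x - 0) / s) std_normal_density"
    using normal_standard_normal_convert[OF s] D by simp
  then have D'': "distributed M lborel (\<lambda>x. Z x / s) std_normal_density" by simp
  have meas: "(\<lambda>x. Z x / s) \<in> measurable M lborel"
    using distributed_measurable[OF D''] .
  have "{\<omega> \<in> space M. \<epsilon> < \<bar>Z \<omega>\<bar>} = (\<lambda>x. Z x / s) -` {x. \<epsilon> / s < \<bar>x\<bar>} \<inter> space M"
    using s by (auto simp: abs_divide divide_less_cancel)
  then have "measure M {\<omega> \<in> space M. \<epsilon> < \<bar>Z \<omega>\<bar>} = measure (distr M lborel (\<lambda>x. Z x / s)) {x. \<epsilon> / s < \<bar>x\<bar>}"
    using measure_distr[OF meas, of "{x. \<epsilon> / s < \<bar>x\<bar>}"] Qn_sets by simp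
  also have "\<dots> = Qn (\<epsilon> / s)"
    unfolding Qn_def distributed_distr_eq_density[OF D''] ..
  finally show ?thesis .
qed

lemma (in prob_space) noise_distr:
  fixes X :: "nat \<Rightarrow> 'a \<Rightarrow> real"
  assumes indep: "indep_vars (\<lambda>_. borel) X {..<n}"
    and g: "\<And>i. i < n \<Longrightarrow> distributed M lborel (X i) (normal_density 0 \<sigma>)"
    and \<sigma>: "0 < \<sigma>" and n: "0 < n" and c: "\<And>j. j < n \<Longrightarrow> 0 < c j"
  shows "distributed M lborel (\<lambda>\<omega>. (1 / real n) * (\<Sum>j<n. c j * X j \<omega>))
           (normal_density 0 (\<sigma> * sqrt ((\<Sum>j<n. (c j)\<^sup>2) / (real n)\<^sup>2)))"
proof -
  have Y: "distributed M lborel (\<lambda>\<omega>. c j * X j \<omega>) (normal_density 0 (c j * \<sigma>))" if j: "j < n" for j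
    using normal_density_affine[OF g[OF j] \<sigma>, of "c j" 0] c[OF j] by simp
  have I: "indep_vars (\<lambda>_. borel) (\<lambda>j \<omega>. c j * X j \<omega>) {..<n}"
    using indep_vars_compose2[OF indep, of "\<lambda>j x. c j * x" "\<lambda>_. borel"] by simp
  have S: "distributed M lborel (\<lambda>\<omega>. \<Sum>j<n. c j * X j \<omega>)
            (normal_density (\<Sum>j<n. 0) (sqrt (\<Sum>j<n. (c j * \<sigma>)\<^sup>2)))"
    apply (rule sum_indep_normal)
        apply simp
       apply (use n in auto)
      apply (rule I)
     apply (simp add: c \<sigma>)
    apply (simp add: Y)
    done
  have pos: "0 < sqrt (\<Sum>j<n. (c j * \<sigma>)\<^sup>2)"
  proof -
    have "0 < (c j * \<sigma>)\<^sup>2" if "j \<in> {..<n}" for j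
      using c[of j] \<sigma> that by simp
    then show ?thesis using n by (intro real_sqrt_gt_zero sum_pos) auto
  qed
  have "distributed M lborel (\<lambda>\<omega>. 0 + (1 / real n) * (\<Sum>j<n. c j * X j \<omega>))
          (normal_density (0 + (1 / real n) * 0) (\<bar>1 / real n\<bar> * sqrt (\<Sum>j<n. (c j * \<sigma>)\<^sup>2)))"
  proof -
    have S': "distributed M lborel (\<lambda>\<omega>. \<Sum>j<n. c j * X j \<omega>)
            (normal_density 0 (sqrt (\<Sum>j<n. (c j * \<sigma>)\<^sup>2)))" using S by simp
    show ?thesis using normal_density_affine[OF S' pos, of "1 / real n" 0] n by simp
  qed
  moreover have "\<bar>1 / real n\<bar> * sqrt (\<Sum>j<n. (c j * \<sigma>)\<^sup>2) = \<sigma> * sqrt ((\<Sum>j<n. (c j)\<^sup>2) / (real n)\<^sup>2)"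
  proof -
    have "(\<Sum>j<n. (c j * \<sigma>)\<^sup>2) = \<sigma>\<^sup>2 * (\<Sum>j<n. (c j)\<^sup>2)"
      by (simp add: power_mult_distrib sum_distrib_left mult.commute)
    then show ?thesis using \<sigma> n
      by (simp add: real_sqrt_mult real_sqrt_divide)
  qed
  ultimately show ?thesis by simp
qed

lemma v_bounds:
  assumes EN: "equal_neighbor n A" and n: "0 < n"
  shows "(\<Sum>j<n. (\<Sum>i<n. A i j)\<^sup>2) / (real n)\<^sup>2 \<le> mx n A"
    and "(mx n A)\<^sup>2 \<le> (\<Sum>j<n. (\<Sum>i<n. A i j)\<^sup>2) / (real n)\<^sup>2"
proof -
  let ?c = "\<lambda>j. \<Sum>i<n. A i j"
  have cnn: "0 \<le> ?c j" if "j<n" for j using en_colpos[OF EN that] by simp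
  have cle: "?c j \<le> real n * mx n A" if "j<n" for j
    using mx_ge[OF that, of A] n by (simp add: divide_le_eq mult.commute)
  have "(\<Sum>j<n. (?c j)\<^sup>2) \<le> (\<Sum>j<n. ?c j * (real n * mx n A))"
    by (intro sum_mono) (use cnn cle in \<open>auto simp: power2_eq_square intro: mult_left_mono\<close>)
  also have "\<dots> = (\<Sum>j<n. ?c j) * (real n * mx n A)"
    by (rule sum_distrib_right[symmetric])
  also have "\<dots> = real n * mx n A * real n"
    using en_coltotal[OF EN] by simp
  finally have "(\<Sum>j<n. (?c j)\<^sup>2) \<le> (real n)\<^sup>2 * mx n A" by (simp add: power2_eq_square mult_ac)
  then show "(\<Sum>j<n. (?c j)\<^sup>2) / (real n)\<^sup>2 \<le> mx n A"
    using n by (simp add: divide_le_eq mult.commute)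
  obtain j where j: "j<n" "?c j / real n = mx n A" using mx_attained[OF n] by blast
  have "(mx n A)\<^sup>2 = (?c j)\<^sup>2 / (real n)\<^sup>2" using j(2) by (simp add: power_divide[symmetric])
  also have "\<dots> \<le> (\<Sum>j<n. (?c j)\<^sup>2) / (real n)\<^sup>2"
    by (intro divide_right_mono member_le_sum) (use j in auto)
  finally show "(mx n A)\<^sup>2 \<le> (\<Sum>j<n. (?c j)\<^sup>2) / (real n)\<^sup>2" .
qed

theorem theorem6:
  fixes P :: "nat \<Rightarrow> nat \<Rightarrow> nat \<Rightarrow> real"
    and M :: "nat \<Rightarrow> 'a measure"
    and \<xi> :: "nat \<Rightarrow> nat \<Rightarrow> 'a \<Rightarrow> real"
    and \<mu> \<sigma> :: real
  assumes EN: "\<And>n. equal_neighbor n (P n)"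
    and sigma_pos: "\<sigma> > 0"
    and prob: "\<And>n. prob_space (M n)"
    and indep: "\<And>n. prob_space.indep_vars (M n) (\<lambda>_. borel) (\<xi> n) {..<n}"
    and gauss: "\<And>n i. i < n \<Longrightarrow> distributed (M n) lborel (\<xi> n i) (normal_density 0 \<sigma>)"
  shows "(no_prominent_individual P \<longleftrightarrow> one_time_wise M \<xi> \<mu> P)
       \<and> (one_time_wise M \<xi> \<mu> P \<longleftrightarrow> pre_uniformly_wise P)"
proof -
  define c where "c n j = (\<Sum>i<n. P n i j)" for n j
  define v where "v n = (\<Sum>j<n. (c n j)\<^sup>2) / (real n)\<^sup>2" for n
  define s where "s n = \<sigma> * sqrt (v n)" for n
  have vnn: "0 \<le> v n" for n unfolding v_def by (intro divide_nonneg_nonneg sum_nonneg) auto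
  have cpos: "0 < c n j" if "j < n" for n j unfolding c_def by (rule en_colpos[OF EN that])
  have vpos: "0 < v n" if n: "0 < n" for n
  proof -
    have "0 < (c n j)\<^sup>2" if "j \<in> {..<n}" for j using cpos[of j n] that by simp
    then have "0 < (\<Sum>j<n. (c n j)\<^sup>2)"
      using n by (intro sum_pos) auto
    then show ?thesis unfolding v_def using n by simp
  qed
  have spos: "0 < s n" if "0 < n" for n
    unfolding s_def using vpos[OF that] sigma_pos by simp
  have iden: "(1 / real n) * (\<Sum>i<n. \<Sum>j<n. P n i j * (\<mu> + \<xi> n j \<omega>)) - \<mu>
      = (1 / real n) * (\<Sum>j<n. c n j * \<xi> n j \<omega>)" if n: "0 < n" for n \<omega>
  proof -
    have "(\<Sum>i<n. \<Sum>j<n. P n i j * (\<mu> + \<xi> n j \<omega>))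
        = (\<Sum>i<n. \<mu> * (\<Sum>j<n. P n i j)) + (\<Sum>i<n. \<Sum>j<n. P n i j * \<xi> n j \<omega>)"
      by (simp add: distrib_left sum.distrib sum_distrib_left mult.commute)
    also have "(\<Sum>i<n. \<mu> * (\<Sum>j<n. P n i j)) = real n * \<mu>"
      using en_rowsum[OF EN] by simp
    also have "(\<Sum>i<n. \<Sum>j<n. P n i j * \<xi> n j \<omega>) = (\<Sum>j<n. c n j * \<xi> n j \<omega>)"
      unfolding c_def by (subst sum.swap) (simp add: sum_distrib_right)
    finally show ?thesis using n by (simp add: field_simps)
  qed
  have key: "measure (M n) {\<omega> \<in> space (M n).
           \<bar>(1 / real n) * (\<Sum>i<n. \<Sum>j<n. P n i j * (\<mu> + \<xi> n j \<omega>)) - \<mu>\<bar> > \<epsilon>}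
         = Qn (\<epsilon> / s n)" if n: "0 < n" for n \<epsilon>
  proof -
    have D: "distributed (M n) lborel (\<lambda>\<omega>. (1 / real n) * (\<Sum>j<n. c n j * \<xi> n j \<omega>))
           (normal_density 0 (\<sigma> * sqrt ((\<Sum>j<n. (c n j)\<^sup>2) / (real n)\<^sup>2)))"
      by (rule prob_space.noise_distr[OF prob indep gauss sigma_pos n cpos])
    have "measure (M n) {\<omega> \<in> space (M n).
           \<bar>(1 / real n) * (\<Sum>i<n. \<Sum>j<n. P n i j * (\<mu> + \<xi> n j \<omega>)) - \<mu>\<bar> > \<epsilon>}
        = measure (M n) {\<omega> \<in> space (M n). \<epsilon> < \<bar>(1 / real n) * (\<Sum>j<n. c n j * \<xi> n j \<omega>)\<bar>}"
      using iden[OF n] by simp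
    also have "\<dots> = Qn (\<epsilon> / s n)"
      using normal_tail[OF prob D, of \<epsilon>] spos[OF n] unfolding s_def v_def by simp
    finally show ?thesis .
  qed
  have OTW: "one_time_wise M \<xi> \<mu> P \<longleftrightarrow> (\<forall>\<epsilon>>0. (\<lambda>n. Qn (\<epsilon> / s n)) \<longlonglongrightarrow> 0)"
    unfolding one_time_wise_def
  proof (intro all_cong1 imp_cong refl tendsto_cong)
    fix \<epsilon> :: real
    show "\<forall>\<^sub>F n in sequentially. measure (M n) {\<omega> \<in> space (M n).
           \<bar>(1 / real n) * (\<Sum>i<n. \<Sum>j<n. P n i j * (\<mu> + \<xi> n j \<omega>)) - \<mu>\<bar> > \<epsilon>}
         = Qn (\<epsilon> / s n)"
      using eventually_gt_at_top[of 0] by eventually_elim (rule key)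
  qed
  have sev: "\<forall>\<^sub>F n in sequentially. 0 < s n"
    using eventually_gt_at_top[of 0] by eventually_elim (rule spos)
  have Q_s: "(\<forall>\<epsilon>>0. (\<lambda>n. Qn (\<epsilon> / s n)) \<longlonglongrightarrow> 0) \<longleftrightarrow> s \<longlonglongrightarrow> 0"
    using Qn_to0[OF _ sev] Qn_from0[OF _ sev] by auto
  have s_v: "s \<longlonglongrightarrow> 0 \<longleftrightarrow> v \<longlonglongrightarrow> 0"
  proof
    assume "s \<longlonglongrightarrow> 0"
    then have "(\<lambda>n. (s n / \<sigma>)\<^sup>2) \<longlonglongrightarrow> (0 / \<sigma>)\<^sup>2" using sigma_pos by (intro tendsto_intros) auto
    moreover have "(s n / \<sigma>)\<^sup>2 = v n" for n unfolding s_def using sigma_pos vnn[of n] by simp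
    ultimately show "v \<longlonglongrightarrow> 0" by simp
  next
    assume "v \<longlonglongrightarrow> 0"
    then have "(\<lambda>n. \<sigma> * sqrt (v n)) \<longlonglongrightarrow> \<sigma> * sqrt 0" by (intro tendsto_intros)
    then show "s \<longlonglongrightarrow> 0" unfolding s_def[abs_def] by simp
  qed
  have vb1: "v n \<le> mx n (P n)" for n
  proof (cases "n = 0")
    case True then show ?thesis by (simp add: v_def mx_def)
  next
    case False then show ?thesis using v_bounds(1)[OF EN, of n] unfolding v_def c_def by simp
  qed
  have vb2: "mx n (P n) \<le> sqrt (v n)" for n
  proof (cases "n = 0")
    case True then show ?thesis by (simp add: v_def mx_def)
  next
    case False
    then have "(mx n (P n))\<^sup>2 \<le> v n" using v_bounds(2)[OF EN, of n] unfolding v_def c_def by simp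
    then show ?thesis using mx_nonneg[OF EN] by (simp add: real_le_rsqrt)
  qed
  have v_mx: "v \<longlonglongrightarrow> 0 \<longleftrightarrow> (\<lambda>n. mx n (P n)) \<longlonglongrightarrow> 0"
  proof
    assume H: "v \<longlonglongrightarrow> 0"
    have "(\<lambda>n. sqrt (v n)) \<longlonglongrightarrow> sqrt 0" by (intro tendsto_intros H)
    then have t: "(\<lambda>n. sqrt (v n)) \<longlonglongrightarrow> 0" by simp
    show "(\<lambda>n. mx n (P n)) \<longlonglongrightarrow> 0"
      by (rule tendsto_sandwich[OF _ _ tendsto_const t]) (use mx_nonneg[OF EN] vb2 in auto)
  next
    assume H: "(\<lambda>n. mx n (P n)) \<longlonglongrightarrow> 0"
    show "v \<longlonglongrightarrow> 0"
      by (intro tendsto_sandwich[OF _ _ tendsto_const H]) (use vnn vb1 in auto)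
  qed
  show ?thesis
    using prominent_iff[OF EN] preuniform_iff[OF EN] OTW Q_s s_v v_mx by blast
qed

end
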